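(* Let $G$ be a graph (without multiple edges) on the node set $\{1,\dots,N\}$, where $N=n_1+n_2$ with $n_1,n_2\ge 2$ and $N\ge 4$, and assign to each edge $(i,j)\in G$ a fixed real weight $w_{ij}$. Let the labels $(g_1,\dots,g_N)$ be uniformly distributed over all binary vectors with exactly $n_1$ zeros and $n_2$ ones, and set $R_1^w=\sum_{(i,j)\in G} w_{ij}I(g_i=g_j=0)$, $R_2^w=\sum_{(i,j)\in G} w_{ij}I(g_i=g_j=1)$. Define $S_1=\sum_{(i,j)\in G}w_{ij}^2$, $S_2=\sum_{i=1}^N\Big(\sum_{j:(i,j)\in G}w_{ij}\Big)^2-S_1$ (equivalently, the sum of $w_ew_f$ over ordered pairs $(e,f)$ of edges of $G$ sharing at least one endpoint, the case $e=f$ included once), and $S_3=\Big(\sum_{(i,j)\in G}w_{ij}\Big)^2$ (the sum of $w_ew_f$ over all ordered pairs of edges $(e,f)$, including $e=f$). Then, writing $K=\frac{n_1n_2(n_1-1)(n_2-1)}{N(N-1)(N-2)(N-3)}$, $$\mathbf{E}(R_1^w)=\sum_{(i,j)\in G}w_{ij}\frac{n_1(n_1-1)}{N(N-1)},\qquad \mathbf{E}(R_2^w)=\sum_{(i,j)\in G}w_{ij}\frac{n_2(n_2-1)}{N(N-1)},$$ $$\mathbf{Var}(R_1^w)=K\Big\{-S_2+\tfrac{2(2N-3)}{N(N-1)}S_3+\tfrac{N-3}{n_2-1}(S_1+S_2)-\tfrac{4(N-3)}{N(n_2-1)}S_3\Big\},$$ $$\mathbf{Var}(R_2^w)=K\Big\{-S_2+\tfrac{2(2N-3)}{N(N-1)}S_3+\tfrac{N-3}{n_1-1}(S_1+S_2)-\tfrac{4(N-3)}{N(n_1-1)}S_3\Big\},$$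 $$\mathbf{Cov}(R_1^w,R_2^w)=K\Big\{-S_2+\tfrac{2(2N-3)}{N(N-1)}S_3\Big\}.$$
   Context: The labels $g_i$ encode sample membership of the pooled observations ($g_i=0$: first sample of size $n_1$; $g_i=1$: second sample of size $n_2$); the uniform distribution over label vectors with the given counts is the permutation null distribution. Edges are unordered pairs, each counted once in sums over $(i,j)\in G$. *)

theory Defs
  imports "HOL-Probability.Probability"
begin

definition label_vectors :: "nat \<Rightarrow> nat \<Rightarrow> (nat \<Rightarrow> nat) set" where
  "label_vectors n1 n2 =
     {g. (\<forall>i\<in>{1..n1+n2}. g i \<in> {0,1}) \<and> (\<forall>i. i \<notin> {1..n1+n2} \<longrightarrow> g i = 0)
         \<and> card {i\<in>{1..n1+n2}. g i = 0} = n1}"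

definition label_pmf :: "nat \<Rightarrow> nat \<Rightarrow> (nat \<Rightarrow> nat) pmf" where
  "label_pmf n1 n2 = pmf_of_set (label_vectors n1 n2)"

definition simple_graph_on :: "nat \<Rightarrow> nat set set \<Rightarrow> bool" where
  "simple_graph_on N E \<longleftrightarrow>
     (\<forall>e\<in>E. \<exists>i j. i \<noteq> j \<and> i \<in> {1..N} \<and> j \<in> {1..N} \<and> e = {i, j})"

definition Rw :: "nat set set \<Rightarrow> (nat set \<Rightarrow> real) \<Rightarrow> nat \<Rightarrow> (nat \<Rightarrow> nat) \<Rightarrow> real" where
  "Rw E w a g = (\<Sum>e\<in>E. w e * (if (\<forall>i\<in>e. g i = a) then 1 else 0))"

definition covariance :: "'a pmf \<Rightarrow> ('a \<Rightarrow> real) \<Rightarrow> ('a \<Rightarrow> real) \<Rightarrow> real" where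
  "covariance p X Y =
     measure_pmf.expectation p (\<lambda>x. (X x - measure_pmf.expectation p X) *
                                     (Y x - measure_pmf.expectation p Y))"

end

theory Submission
  imports Defs
begin

lemma label_vectors_bij:
  "bij_betw (\<lambda>g. {i\<in>{1..n1+n2}. g i = 0}) (label_vectors n1 n2) {Z. Z \<subseteq> {1..n1+n2} \<and> card Z = n1}"
proof -
  let ?U = "{1..n1+n2}"
  have inj: "inj_on (\<lambda>g. {i\<in>?U. g i = 0}) (label_vectors n1 n2)"
  proof (rule inj_onI)
    fix g h assume g: "g \<in> label_vectors n1 n2" and h: "h \<in> label_vectors n1 n2"
      and eq: "{i\<in>?U. g i = 0} = {i\<in>?U. h i = 0}"
    show "g = h"
    proof
      fix i show "g i = h i"
      proof (cases "i \<in> ?U")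
        case True
        then have "g i \<in> {0,1}" "h i \<in> {0,1}" using g h by (auto simp: label_vectors_def)
        moreover have "g i = 0 \<longleftrightarrow> h i = 0" using eq True by blast
        ultimately show ?thesis by auto
      next
        case False
        then show ?thesis using g h by (auto simp: label_vectors_def)
      qed
    qed
  qed
  have img: "(\<lambda>g. {i\<in>?U. g i = 0}) ` label_vectors n1 n2 = {Z. Z \<subseteq> ?U \<and> card Z = n1}"
  proof
    show "(\<lambda>g. {i\<in>?U. g i = 0}) ` label_vectors n1 n2 \<subseteq> {Z. Z \<subseteq> ?U \<and> card Z = n1}"
    proof
      fix Z assume "Z \<in> (\<lambda>g. {i\<in>?U. g i = 0}) ` label_vectors n1 n2"
      then obtain g where g: "g \<in> label_vectors n1 n2" and Zg: "Z = {i\<in>?U. g i = 0}" by blast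
      have "card {i\<in>?U. g i = 0} = n1" using g unfolding label_vectors_def by blast
      then show "Z \<in> {Z. Z \<subseteq> ?U \<and> card Z = n1}" using Zg by blast
    qed
  next
    show "{Z. Z \<subseteq> ?U \<and> card Z = n1} \<subseteq> (\<lambda>g. {i\<in>?U. g i = 0}) ` label_vectors n1 n2"
    proof
      fix Z assume Z: "Z \<in> {Z. Z \<subseteq> ?U \<and> card Z = n1}"
      define g where "g = (\<lambda>i. if i \<in> ?U \<and> i \<notin> Z then 1 else (0::nat))"
      have zs: "{i\<in>?U. g i = 0} = Z" using Z by (auto simp: g_def)
      have "g \<in> label_vectors n1 n2" unfolding label_vectors_def
      proof (intro CollectI conjI)
        show "card {i\<in>?U. g i = 0} = n1" using zs Z by simp
      qed (auto simp: g_def)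
      then show "Z \<in> (\<lambda>g. {i\<in>?U. g i = 0}) ` label_vectors n1 n2" using zs by (intro image_eqI[where x=g]) auto
    qed
  qed
  show ?thesis using inj img by (simp add: bij_betw_def)
qed

lemma card_label_vectors: "card (label_vectors n1 n2) = (n1 + n2) choose n1"
  and finite_label_vectors: "finite (label_vectors n1 n2)"
proof -
  have "card (label_vectors n1 n2) = card {Z. Z \<subseteq> {1..n1+n2} \<and> card Z = n1}"
    using bij_betw_same_card[OF label_vectors_bij] .
  also have "\<dots> = (n1 + n2) choose n1" by (simp add: n_subsets)
  finally show "card (label_vectors n1 n2) = (n1 + n2) choose n1" .
  have "finite {Z. Z \<subseteq> {1..n1+n2} \<and> card Z = n1}" by simp
  then show "finite (label_vectors n1 n2)"
    using bij_betw_finite[OF label_vectors_bij] by blast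
qed

lemma count_AB:
  assumes AU: "A \<subseteq> {1..n1+n2}" and BU: "B \<subseteq> {1..n1+n2}" and AB: "A \<inter> B = {}"
  shows "card {g\<in>label_vectors n1 n2. (\<forall>i\<in>A. g i = 0) \<and> (\<forall>i\<in>B. g i = 1)} =
     (if card A \<le> n1 then (n1 + n2 - card A - card B) choose (n1 - card A) else 0)"
proof -
  let ?U = "{1..n1+n2}"
  let ?f = "\<lambda>g. {i\<in>?U. g i = 0}"
  let ?S = "{g\<in>label_vectors n1 n2. (\<forall>i\<in>A. g i = 0) \<and> (\<forall>i\<in>B. g i = 1)}"
  let ?T = "{Z. Z \<subseteq> ?U \<and> card Z = n1 \<and> A \<subseteq> Z \<and> Z \<inter> B = {}}"
  have bij: "bij_betw ?f (label_vectors n1 n2) {Z. Z \<subseteq> ?U \<and> card Z = n1}"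
    by (rule label_vectors_bij)
  have sub: "?S \<subseteq> label_vectors n1 n2" by blast
  have inj: "inj_on ?f ?S" by (rule inj_on_subset[OF bij_betw_imp_inj_on[OF bij] sub])
  have surj: "?f ` label_vectors n1 n2 = {Z. Z \<subseteq> ?U \<and> card Z = n1}" by (rule bij_betw_imp_surj_on[OF bij])
  have img: "?f ` ?S = ?T"
  proof
    show "?f ` ?S \<subseteq> ?T"
    proof
      fix Z assume "Z \<in> ?f ` ?S"
      then obtain g where g: "g \<in> ?S" and Zg: "Z = ?f g" by blast
      have "Z \<in> ?f ` label_vectors n1 n2" using g Zg by blast
      then have "Z \<subseteq> ?U \<and> card Z = n1" unfolding surj by blast
      moreover have "A \<subseteq> Z" using g Zg AU by auto
      moreover have "Z \<inter> B = {}" using g Zg by auto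
      ultimately show "Z \<in> ?T" by blast
    qed
  next
    show "?T \<subseteq> ?f ` ?S"
    proof
      fix Z assume Z: "Z \<in> ?T"
      then have "Z \<in> ?f ` label_vectors n1 n2" unfolding surj by blast
      then obtain g where g: "g \<in> label_vectors n1 n2" and Zg: "Z = ?f g" by blast
      have "\<forall>i\<in>A. g i = 0" using Z Zg by auto
      moreover have "\<forall>i\<in>B. g i = 1"
      proof
        fix i assume i: "i \<in> B"
        then have "i \<in> ?U" using BU by auto
        moreover have "i \<notin> Z" using Z i by auto
        ultimately have "g i \<noteq> 0" using Zg by auto
        moreover have "g i \<in> {0,1}" using g \<open>i \<in> ?U\<close> by (auto simp: label_vectors_def)
        ultimately show "g i = 1" by auto
      qed
      ultimately have "g \<in> ?S" using g by blast
      then show "Z \<in> ?f ` ?S" using Zg by blast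
    qed
  qed
  have cST: "card ?S = card ?T" using card_image[OF inj] img by simp
  have finA: "finite A" using AU finite_subset by blast
  have finB: "finite B" using BU finite_subset by blast
  show ?thesis
  proof (cases "card A \<le> n1")
    case False
    have "?T = {}"
    proof (rule ccontr)
      assume "?T \<noteq> {}"
      then obtain Z where Z: "Z \<in> ?T" by blast
      then have "finite Z" using finite_subset by blast
      then have "card A \<le> card Z" using Z card_mono by blast
      then show False using Z False by auto
    qed
    then show ?thesis using cST False by simp
  next
    case True
    let ?V = "?U - A - B"
    let ?W = "{Z'. Z' \<subseteq> ?V \<and> card Z' = n1 - card A}"
    have inj2: "inj_on (\<lambda>Z'. Z' \<union> A) ?W"
    proof (rule inj_onI)
      fix X Y assume "X \<in> ?W" "Y \<in> ?W" "X \<union> A = Y \<union> A"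
      then show "X = Y" by blast
    qed
    have img2: "(\<lambda>Z'. Z' \<union> A) ` ?W = ?T"
    proof
      show "(\<lambda>Z'. Z' \<union> A) ` ?W \<subseteq> ?T"
      proof
        fix Z assume "Z \<in> (\<lambda>Z'. Z' \<union> A) ` ?W"
        then obtain X where X: "X \<in> ?W" and ZX: "Z = X \<union> A" by blast
        have finX: "finite X" using X finite_subset[of X ?U] by auto
        have "X \<inter> A = {}" using X by auto
        then have "card Z = card X + card A" using ZX card_Un_disjoint finX finA by metis
        then have "card Z = n1" using X True by simp
        then show "Z \<in> ?T" using X ZX AU AB by auto
      qed
    next
      show "?T \<subseteq> (\<lambda>Z'. Z' \<union> A) ` ?W"
      proof
        fix Z assume Z: "Z \<in> ?T"
        have finZ: "finite Z" using Z finite_subset by blast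
        have "card (Z - A) = card Z - card A" using Z finA by (simp add: card_Diff_subset)
        then have "Z - A \<in> ?W" using Z by auto
        moreover have "Z = (Z - A) \<union> A" using Z by auto
        ultimately show "Z \<in> (\<lambda>Z'. Z' \<union> A) ` ?W" by blast
      qed
    qed
    have "card ?T = card ?W" using card_image[OF inj2] img2 by simp
    also have "\<dots> = card ?V choose (n1 - card A)" by (simp add: n_subsets)
    also have "card ?V = n1 + n2 - card A - card B"
    proof -
      have "?V = ?U - (A \<union> B)" by auto
      then have "card ?V = card ?U - card (A \<union> B)" using AU BU by (simp add: card_Diff_subset finA finB)
      moreover have "card (A \<union> B) = card A + card B" using AB finA finB card_Un_disjoint by blast
      ultimately show ?thesis by simp
    qed
    finally show ?thesis using cST True by simp
  qed
qed

lemma fact_prod: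
  assumes "k \<le> a"
  shows "(fact a :: real) = fact (a - k) * (\<Prod>i<k. real a - real i)"
  using assms
proof (induction k)
  case 0 then show ?case by simp
next
  case (Suc k)
  then have IH: "(fact a :: real) = fact (a - k) * (\<Prod>i<k. real a - real i)" by simp
  have eq: "a - k = Suc (a - Suc k)" using Suc.prems by simp
  have "(fact (a - k) :: real) = real (a - k) * fact (a - Suc k)"
    by (subst eq, simp only: fact_Suc of_nat_mult) (simp add: eq[symmetric])
  also have "real (a - k) = real a - real k" using Suc.prems by simp
  finally have eq2: "(fact (a - k) :: real) = (real a - real k) * fact (a - Suc k)" .
  have "(fact a :: real) = fact (a - Suc k) * ((\<Prod>i<k. real a - real i) * (real a - real k))"
    by (subst IH, subst eq2) (simp only: mult_ac)
  then show ?case by (simp add: prod.lessThan_Suc)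
qed

lemma ratio_alg:
  fixes X fa fb PN P1 P2 :: real
  assumes "X \<noteq> 0" "fa \<noteq> 0" "fb \<noteq> 0" "PN \<noteq> 0"
  shows "(X / (fa * fb)) / ((X * PN) / ((fa * P1) * (fb * P2))) = P1 * P2 / PN"
  using assms by (cases "P1 = 0 \<or> P2 = 0") (auto simp: field_simps)

lemma prob_AB:
  assumes AU: "A \<subseteq> {1..n1+n2}" and BU: "B \<subseteq> {1..n1+n2}" and AB: "A \<inter> B = {}"
  shows "real (card {g\<in>label_vectors n1 n2. (\<forall>i\<in>A. g i = 0) \<and> (\<forall>i\<in>B. g i = 1)}) /
           real (card (label_vectors n1 n2)) =
    (\<Prod>i<card A. real n1 - real i) * (\<Prod>i<card B. real n2 - real i) /
      (\<Prod>i<card A + card B. real (n1+n2) - real i)"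
proof -
  let ?k = "card A" and ?m = "card B"
  have finA: "finite A" using AU finite_subset by blast
  have finB: "finite B" using BU finite_subset by blast
  have "card (A \<union> B) \<le> card {1..n1+n2}" using AU BU by (intro card_mono) auto
  moreover have "card (A \<union> B) = ?k + ?m" using AB finA finB card_Un_disjoint by blast
  ultimately have km: "?k + ?m \<le> n1 + n2" by simp
  have PN: "(\<Prod>i<?k + ?m. real (n1+n2) - real i) \<noteq> 0" using km by (auto simp: prod_zero_iff)
  show ?thesis
  proof (cases "?k \<le> n1 \<and> ?m \<le> n2")
    case True
    define a where "a = n1 - ?k"
    define b where "b = n2 - ?m"
    have n1a: "n1 = a + ?k" and n2b: "n2 = b + ?m" using True by (auto simp: a_def b_def)
    have cnt: "card {g\<in>label_vectors n1 n2. (\<forall>i\<in>A. g i = 0) \<and> (\<forall>i\<in>B. g i = 1)} = (a + b) choose a"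
    proof -
      have "n1 + n2 - ?k - ?m = a + b" "n1 - ?k = a" using True by (simp_all add: a_def b_def)
      then show ?thesis using count_AB[OF AU BU AB] True by simp
    qed
    have f1: "(fact n1 :: real) = fact a * (\<Prod>i<?k. real n1 - real i)"
      using fact_prod[of ?k n1] True by (simp add: a_def)
    have f2: "(fact n2 :: real) = fact b * (\<Prod>i<?m. real n2 - real i)"
      using fact_prod[of ?m n2] True by (simp add: b_def)
    have f3: "(fact (n1+n2) :: real) = fact (a+b) * (\<Prod>i<?k+?m. real (n1+n2) - real i)"
      using fact_prod[of "?k+?m" "n1+n2"] km n1a n2b by simp
    have b1: "real ((a+b) choose a) = fact (a+b) / (fact a * fact b)"
      by (simp add: binomial_fact)
    have b2: "real ((n1+n2) choose n1) = fact (n1+n2) / (fact n1 * fact n2)"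
      by (simp add: binomial_fact)
    have "real (card {g\<in>label_vectors n1 n2. (\<forall>i\<in>A. g i = 0) \<and> (\<forall>i\<in>B. g i = 1)}) /
           real (card (label_vectors n1 n2)) = (fact (a+b) / (fact a * fact b)) /
         ((fact (a+b) * (\<Prod>i<?k+?m. real (n1+n2) - real i)) / ((fact a * (\<Prod>i<?k. real n1 - real i)) * (fact b * (\<Prod>i<?m. real n2 - real i))))"
      unfolding cnt card_label_vectors b1 b2 f1 f2 f3 by (simp only: mult.assoc)
    also have "\<dots> = (\<Prod>i<?k. real n1 - real i) * (\<Prod>i<?m. real n2 - real i) / (\<Prod>i<?k+?m. real (n1+n2) - real i)"
      by (rule ratio_alg) (use PN in auto)
    finally show ?thesis .
  next
    case False
    have z: "(\<Prod>i<card A. real n1 - real i) * (\<Prod>i<card B. real n2 - real i) = 0"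
    proof (cases "?k \<le> n1")
      case True
      then have "n2 < ?m" using False by simp
      then show ?thesis by (auto simp: prod_zero_iff intro!: bexI[of _ n2])
    next
      case False
      then show ?thesis by (auto simp: prod_zero_iff intro!: bexI[of _ n1])
    qed
    have "card {g\<in>label_vectors n1 n2. (\<forall>i\<in>A. g i = 0) \<and> (\<forall>i\<in>B. g i = 1)} = 0"
      using count_AB[OF AU BU AB] False km by (auto intro!: binomial_eq_0)
    then show ?thesis using z by simp
  qed
qed



lemma sum_ind_card:
  assumes "finite S"
  shows "(\<Sum>x\<in>S. if P x then 1 else (0::real)) = real (card {x\<in>S. P x})"
proof -
  have "{x\<in>S. P x} = S \<inter> Collect P" by auto
  then show ?thesis using assms by (simp add: sum.If_cases)
qed

lemma mean_cov:
  fixes X Y :: "'a \<Rightarrow> real"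
  assumes "finite S" "S \<noteq> {}"
  shows "(\<Sum>x\<in>S. (X x - sum X S / card S) * (Y x - sum Y S / card S)) / card S
     = (\<Sum>x\<in>S. X x * Y x) / card S - (sum X S / card S) * (sum Y S / card S)"
proof -
  define c where "c = real (card S)"
  have c0: "c > 0" using assms by (simp add: c_def card_gt_0_iff)
  define mX where "mX = sum X S / c"
  define mY where "mY = sum Y S / c"
  have sX: "sum X S = c * mX" using c0 by (simp add: mX_def)
  have sY: "sum Y S = c * mY" using c0 by (simp add: mY_def)
  have "(\<Sum>x\<in>S. (X x - mX) * (Y x - mY)) = (\<Sum>x\<in>S. X x * Y x) - mY * sum X S - mX * sum Y S + c * (mX * mY)"
    by (simp add: algebra_simps sum.distrib sum_subtractf sum_distrib_left sum_distrib_right c_def)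
  also have "\<dots> = (\<Sum>x\<in>S. X x * Y x) - c * (mX * mY)" by (simp add: sX sY algebra_simps)
  finally have "(\<Sum>x\<in>S. (X x - mX) * (Y x - mY)) = (\<Sum>x\<in>S. X x * Y x) - c * (mX * mY)" .
  then show ?thesis using c0 unfolding mX_def[symmetric] mY_def[symmetric] c_def[symmetric]
    by (simp add: field_simps)
qed

lemma double_sum:
  fixes X Y :: "'e \<Rightarrow> 'g \<Rightarrow> real"
  shows "(\<Sum>g\<in>L. (\<Sum>e\<in>E. w e * X e g) * (\<Sum>f\<in>E. w f * Y f g))
       = (\<Sum>e\<in>E. \<Sum>f\<in>E. w e * w f * (\<Sum>g\<in>L. X e g * Y f g))"
proof -
  have "(\<Sum>g\<in>L. (\<Sum>e\<in>E. w e * X e g) * (\<Sum>f\<in>E. w f * Y f g))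
      = (\<Sum>g\<in>L. \<Sum>e\<in>E. \<Sum>f\<in>E. w e * w f * (X e g * Y f g))"
    by (simp add: sum_product mult_ac)
  also have "\<dots> = (\<Sum>e\<in>E. \<Sum>g\<in>L. \<Sum>f\<in>E. w e * w f * (X e g * Y f g))"
    by (rule sum.swap)
  also have "\<dots> = (\<Sum>e\<in>E. \<Sum>f\<in>E. \<Sum>g\<in>L. w e * w f * (X e g * Y f g))"
    by (rule sum.cong[OF refl], rule sum.swap)
  also have "\<dots> = (\<Sum>e\<in>E. \<Sum>f\<in>E. w e * w f * (\<Sum>g\<in>L. X e g * Y f g))"
    by (simp add: sum_distrib_left)
  finally show ?thesis .
qed

lemma split3:
  fixes w :: "'e \<Rightarrow> real"
  assumes "finite E"
  shows "(\<Sum>e\<in>E. \<Sum>f\<in>E. w e * w f * (a + b * k e f + d * (if e = f then 1 else 0)))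
     = a * (\<Sum>e\<in>E. w e)\<^sup>2 + b * (\<Sum>e\<in>E. \<Sum>f\<in>E. w e * w f * k e f) + d * (\<Sum>e\<in>E. (w e)\<^sup>2)"
proof -
  have d: "(\<Sum>e\<in>E. \<Sum>f\<in>E. w e * w f * (if e = f then 1 else 0)) = (\<Sum>e\<in>E. (w e)\<^sup>2)"
  proof (rule sum.cong[OF refl])
    fix e assume "e \<in> E"
    have "(\<Sum>f\<in>E. w e * w f * (if e = f then 1 else 0)) = (\<Sum>f\<in>E. if e = f then w e * w f else 0)"
      by (rule sum.cong) auto
    also have "\<dots> = (w e)\<^sup>2" using \<open>e \<in> E\<close> assms by (simp add: power2_eq_square)
    finally show "(\<Sum>f\<in>E. w e * w f * (if e = f then 1 else 0)) = (w e)\<^sup>2" .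
  qed
  have sq: "(\<Sum>e\<in>E. w e)\<^sup>2 = (\<Sum>e\<in>E. \<Sum>f\<in>E. w e * w f)"
    by (simp add: power2_eq_square sum_product)
  have "(\<Sum>e\<in>E. \<Sum>f\<in>E. w e * w f * (a + b * k e f + d * (if e = f then 1 else 0)))
     = a * (\<Sum>e\<in>E. \<Sum>f\<in>E. w e * w f) + b * (\<Sum>e\<in>E. \<Sum>f\<in>E. w e * w f * k e f)
       + d * (\<Sum>e\<in>E. \<Sum>f\<in>E. w e * w f * (if e = f then 1 else 0))"
    by (simp add: algebra_simps sum.distrib sum_distrib_left)
  then show ?thesis using d sq by simp
qed

lemma Q_ident:
  fixes w :: "nat set \<Rightarrow> real"
  assumes "finite E" "\<forall>e\<in>E. e \<subseteq> U" "finite U"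
  shows "(\<Sum>e\<in>E. \<Sum>f\<in>E. w e * w f * real (card (e \<inter> f))) = (\<Sum>i\<in>U. (\<Sum>e\<in>{e\<in>E. i \<in> e}. w e)\<^sup>2)"
proof -
  have "(\<Sum>i\<in>U. (\<Sum>e\<in>{e\<in>E. i \<in> e}. w e)\<^sup>2) = (\<Sum>i\<in>U. (\<Sum>e\<in>E. if i \<in> e then w e else 0)\<^sup>2)"
    using assms(1) by (simp add: sum.inter_filter)
  also have "\<dots> = (\<Sum>i\<in>U. \<Sum>e\<in>E. \<Sum>f\<in>E. w e * w f * (if i \<in> e \<and> i \<in> f then 1 else 0))"
    apply (simp only: power2_eq_square sum_product)
    apply (intro sum.cong refl)
    by auto
  also have "\<dots> = (\<Sum>e\<in>E. \<Sum>i\<in>U. \<Sum>f\<in>E. w e * w f * (if i \<in> e \<and> i \<in> f then 1 else 0))"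
    by (rule sum.swap)
  also have "\<dots> = (\<Sum>e\<in>E. \<Sum>f\<in>E. \<Sum>i\<in>U. w e * w f * (if i \<in> e \<and> i \<in> f then 1 else 0))"
    by (rule sum.cong[OF refl], rule sum.swap)
  also have "\<dots> = (\<Sum>e\<in>E. \<Sum>f\<in>E. w e * w f * real (card (e \<inter> f)))"
  proof (intro sum.cong refl)
    fix e f assume e: "e \<in> E" and f: "f \<in> E"
    have "(\<Sum>i\<in>U. (if i \<in> e \<and> i \<in> f then 1 else (0::real))) = real (card {i\<in>U. i \<in> e \<and> i \<in> f})"
      by (rule sum_ind_card[OF assms(3)])
    also have "{i\<in>U. i \<in> e \<and> i \<in> f} = e \<inter> f" using e assms(2) by auto
    finally show "(\<Sum>i\<in>U. w e * w f * (if i \<in> e \<and> i \<in> f then 1 else 0)) = w e * w f * real (card (e \<inter> f))"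
      by (simp add: sum_distrib_left[symmetric])
  qed
  finally show ?thesis by simp
qed

lemma pair_decomp:
  fixes h :: "nat \<Rightarrow> real"
  assumes "finite e" "finite f" "card e = 2" "card f = 2"
  shows "h (card (e \<union> f)) = h 4 + (h 3 - h 4) * real (card (e \<inter> f)) + (h 2 - 2 * h 3 + h 4) * (if e = f then 1 else 0)"
    and "(if e \<inter> f = {} then 1 else 0) = 1 - real (card (e \<inter> f)) + (if e = f then 1 else (0::real))"
proof -
  have u: "card e + card f = card (e \<union> f) + card (e \<inter> f)" using assms card_Un_Int by blast
  have le: "card (e \<inter> f) \<le> 2" using assms card_mono[of e "e \<inter> f"] by auto
  have eq2: "card (e \<inter> f) = 2 \<longleftrightarrow> e = f"
  proof
    assume c: "card (e \<inter> f) = 2"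
    have "e \<inter> f = e" using c assms by (metis Int_lower1 card_subset_eq)
    moreover have "e \<inter> f = f" using c assms by (metis Int_lower2 card_subset_eq)
    ultimately show "e = f" by simp
  next
    assume "e = f" then show "card (e \<inter> f) = 2" using assms by simp
  qed
  have e0: "card (e \<inter> f) = 0 \<longleftrightarrow> e \<inter> f = {}" using assms by simp
  have "card (e \<inter> f) = 0 \<or> card (e \<inter> f) = 1 \<or> card (e \<inter> f) = 2" using le by auto
  then have "h (card (e \<union> f)) = h 4 + (h 3 - h 4) * real (card (e \<inter> f)) + (h 2 - 2 * h 3 + h 4) * (if e = f then 1 else 0)
    \<and> (if e \<inter> f = {} then 1 else 0) = 1 - real (card (e \<inter> f)) + (if e = f then 1 else (0::real))"
  proof (elim disjE)
    assume a: "card (e \<inter> f) = 0"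
    have "card (e \<union> f) = 4" using u assms(3,4) a by simp
    moreover have "e \<noteq> f" using eq2 a by simp
    moreover have "e \<inter> f = {}" using e0 a by simp
    ultimately show ?thesis using a by simp
  next
    assume a: "card (e \<inter> f) = 1"
    have "card (e \<union> f) = 3" using u assms(3,4) a by simp
    moreover have "e \<noteq> f" using eq2 a by simp
    moreover have "e \<inter> f \<noteq> {}" using e0 a by simp
    ultimately show ?thesis using a by simp
  next
    assume a: "card (e \<inter> f) = 2"
    have "card (e \<union> f) = 2" using u assms(3,4) a by simp
    moreover have "e = f" using eq2 a by simp
    moreover have "e \<inter> f \<noteq> {}" using e0 a by simp
    ultimately show ?thesis using a by simp
  qed
  then show "h (card (e \<union> f)) = h 4 + (h 3 - h 4) * real (card (e \<inter> f)) + (h 2 - 2 * h 3 + h 4) * (if e = f then 1 else 0)"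
    and "(if e \<inter> f = {} then 1 else 0) = 1 - real (card (e \<inter> f)) + (if e = f then 1 else (0::real))"
    by blast+
qed

lemma aux_div2:
  fixes S :: "'e \<Rightarrow> 'e \<Rightarrow> real"
  shows "(\<Sum>e\<in>E. \<Sum>f\<in>E. w e * w f * S e f) / c = (\<Sum>e\<in>E. \<Sum>f\<in>E. w e * w f * (S e f / c))"
  by (simp add: sum_divide_distrib)

lemma single_sum_c:
  fixes X :: "'e \<Rightarrow> 'g \<Rightarrow> real"
  shows "(\<Sum>g\<in>L. \<Sum>e\<in>E. w e * X e g) / c = (\<Sum>e\<in>E. w e * ((\<Sum>g\<in>L. X e g) / c))"
proof -
  have "(\<Sum>g\<in>L. \<Sum>e\<in>E. w e * X e g) = (\<Sum>e\<in>E. \<Sum>g\<in>L. w e * X e g)" by (rule sum.swap)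
  then show ?thesis by (simp add: sum_divide_distrib sum_distrib_left)
qed

lemma double_sum_c:
  fixes X Y :: "'e \<Rightarrow> 'g \<Rightarrow> real"
  shows "(\<Sum>g\<in>L. (\<Sum>e\<in>E. w e * X e g) * (\<Sum>f\<in>E. w f * Y f g)) / c
       = (\<Sum>e\<in>E. \<Sum>f\<in>E. w e * w f * ((\<Sum>g\<in>L. X e g * Y f g) / c))"
  unfolding double_sum by (rule aux_div2)

lemma lin_var:
  fixes u3 uQ u1 h K al be ga W QQ S1 :: real
  assumes "u3 - h * h = K * (al - ga)" "uQ = K * (- 1 + be)" "u1 = K"
  shows "u3 * W\<^sup>2 + uQ * QQ + u1 * S1 - (W * h) * (W * h)
     = K * (- (QQ - S1) + al * W\<^sup>2 + be * (S1 + (QQ - S1)) - ga * W\<^sup>2)"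
  using assms by algebra

lemma lin_cov:
  fixes q h h' K al W QQ S1 :: real
  assumes "q - h * h' = K * al" "q = K"
  shows "q * W\<^sup>2 + (- q) * QQ + q * S1 - (W * h) * (W * h')
     = K * (- (QQ - S1) + al * W\<^sup>2)"
  using assms by algebra

lemma c3:
  fixes x y N K :: real
  assumes "x \<ge> 2" "y \<ge> 2" "N = x + y" "K = x*y*(x-1)*(y-1)/(N*(N-1)*(N-2)*(N-3))"
  shows "x*(x-1)*(x-2)*(x-3)/(N*(N-1)*(N-2)*(N-3)) - (x*(x-1)/(N*(N-1))) * (x*(x-1)/(N*(N-1)))
   = K * (2*(2*N-3)/(N*(N-1)) - 4*(N-3)/(N*(y-1)))"
proof -
  have h: "x+y \<noteq> 0" "x+y-1 \<noteq> 0" "x+y-2\<noteq>0" "x+y-3\<noteq>0" "y-1\<noteq>0" using assms by auto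
  show ?thesis unfolding assms(3,4) using h apply (simp add: divide_simps power2_eq_square) by algebra
qed

lemma cQ:
  fixes x y N K :: real
  assumes "x \<ge> 2" "y \<ge> 2" "N = x + y" "K = x*y*(x-1)*(y-1)/(N*(N-1)*(N-2)*(N-3))"
  shows "x*(x-1)*(x-2)/(N*(N-1)*(N-2)) - x*(x-1)*(x-2)*(x-3)/(N*(N-1)*(N-2)*(N-3))
   = K * (-1 + (N-3)/(y-1))"
proof -
  have h: "x+y \<noteq> 0" "x+y-1 \<noteq> 0" "x+y-2\<noteq>0" "x+y-3\<noteq>0" "y-1\<noteq>0" using assms by auto
  show ?thesis unfolding assms(3,4) using h apply (simp add: divide_simps power2_eq_square) by algebra
qed

lemma c1:
  fixes x y N K :: real
  assumes "x \<ge> 2" "y \<ge> 2" "N = x + y" "K = x*y*(x-1)*(y-1)/(N*(N-1)*(N-2)*(N-3))"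
  shows "x*(x-1)/(N*(N-1)) - 2*(x*(x-1)*(x-2)/(N*(N-1)*(N-2))) + x*(x-1)*(x-2)*(x-3)/(N*(N-1)*(N-2)*(N-3))
   = K"
proof -
  have h: "x+y \<noteq> 0" "x+y-1 \<noteq> 0" "x+y-2\<noteq>0" "x+y-3\<noteq>0" "y-1\<noteq>0" using assms by auto
  show ?thesis unfolding assms(3,4) using h apply (simp add: divide_simps power2_eq_square) by algebra
qed

lemma ccov:
  fixes x y N K :: real
  assumes "x \<ge> 2" "y \<ge> 2" "N = x + y" "K = x*y*(x-1)*(y-1)/(N*(N-1)*(N-2)*(N-3))"
  shows "x*(x-1)*(y*(y-1))/(N*(N-1)*(N-2)*(N-3)) - (x*(x-1)/(N*(N-1))) * (y*(y-1)/(N*(N-1)))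
   = K * (2*(2*N-3)/(N*(N-1)))"
    and "x*(x-1)*(y*(y-1))/(N*(N-1)*(N-2)*(N-3)) = K"
proof -
  have h: "x+y \<noteq> 0" "x+y-1 \<noteq> 0" "x+y-2\<noteq>0" "x+y-3\<noteq>0" "y-1\<noteq>0" using assms by auto
  show "x*(x-1)*(y*(y-1))/(N*(N-1)*(N-2)*(N-3)) - (x*(x-1)/(N*(N-1))) * (y*(y-1)/(N*(N-1)))
   = K * (2*(2*N-3)/(N*(N-1)))"
    unfolding assms(3,4) using h apply (simp add: divide_simps power2_eq_square) by algebra
  show "x*(x-1)*(y*(y-1))/(N*(N-1)*(N-2)*(N-3)) = K"
    unfolding assms(4) by (simp add: mult_ac)
qed

lemma ff_vals:
  "(\<Prod>i<2. real n - real i) = real n * (real n - 1)"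
  "(\<Prod>i<3. real n - real i) = real n * (real n - 1) * (real n - 2)"
  "(\<Prod>i<4. real n - real i) = real n * (real n - 1) * (real n - 2) * (real n - 3)"
  by (simp_all add: eval_nat_numeral prod.lessThan_Suc algebra_simps)


theorem lemma1:
  fixes n1 n2 :: nat and E :: "nat set set" and w :: "nat set \<Rightarrow> real"
  assumes "n1 \<ge> 2" "n2 \<ge> 2"
    and "simple_graph_on (n1 + n2) E"
  defines "N \<equiv> real (n1 + n2)"
    and "p \<equiv> label_pmf n1 n2"
    and "R1 \<equiv> Rw E w 0" and "R2 \<equiv> Rw E w 1"
    and "S1 \<equiv> (\<Sum>e\<in>E. (w e)\<^sup>2)"
    and "S2 \<equiv> (\<Sum>i\<in>{1..n1+n2}. (\<Sum>e\<in>{e\<in>E. i \<in> e}. w e)\<^sup>2) - (\<Sum>e\<in>E. (w e)\<^sup>2)"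
    and "S3 \<equiv> (\<Sum>e\<in>E. w e)\<^sup>2"
    and "K \<equiv> real n1 * real n2 * (real n1 - 1) * (real n2 - 1) / (real (n1 + n2) * (real (n1 + n2) - 1) * (real (n1 + n2) - 2) * (real (n1 + n2) - 3))"
  shows "measure_pmf.expectation p R1 = (\<Sum>e\<in>E. w e * (real n1 * (real n1 - 1) / (N * (N - 1)))) \<and>
         measure_pmf.expectation p R2 = (\<Sum>e\<in>E. w e * (real n2 * (real n2 - 1) / (N * (N - 1)))) \<and>
         measure_pmf.variance p R1 =
           K * (- S2 + 2 * (2 * N - 3) / (N * (N - 1)) * S3
                + (N - 3) / (real n2 - 1) * (S1 + S2) - 4 * (N - 3) / (N * (real n2 - 1)) * S3) \<and>
         measure_pmf.variance p R2 =
           K * (- S2 + 2 * (2 * N - 3) / (N * (N - 1)) * S3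
                + (N - 3) / (real n1 - 1) * (S1 + S2) - 4 * (N - 3) / (N * (real n1 - 1)) * S3) \<and>
         covariance p R1 R2 = K * (- S2 + 2 * (2 * N - 3) / (N * (N - 1)) * S3)"
proof -
  let ?U = "{1..n1+n2}"
  define L where "L = label_vectors n1 n2"
  define c where "c = real (card L)"
  define ind :: "nat \<Rightarrow> nat set \<Rightarrow> (nat \<Rightarrow> nat) \<Rightarrow> real"
    where "ind = (\<lambda>a e g. if (\<forall>i\<in>e. g i = a) then 1 else 0)"
  define ff :: "nat \<Rightarrow> nat \<Rightarrow> real" where "ff = (\<lambda>n j. \<Prod>i<j. real n - real i)"
  define QQ where "QQ = (\<Sum>i\<in>?U. (\<Sum>e\<in>{e\<in>E. i \<in> e}. w e)\<^sup>2)"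
  define W where "W = (\<Sum>e\<in>E. w e)"
  have x2: "real n1 \<ge> 2" and y2: "real n2 \<ge> 2" using assms(1,2) by simp_all
  have Nxy: "N = real n1 + real n2" and Nyx: "N = real n2 + real n1" by (simp_all add: N_def)
  have S2QQ: "S2 = QQ - S1" by (simp add: S2_def QQ_def S1_def)
  have S3W: "S3 = W\<^sup>2" by (simp add: S3_def W_def)
  have Kxy: "K = real n1 * real n2 * (real n1 - 1) * (real n2 - 1) / (N*(N-1)*(N-2)*(N-3))"
    unfolding K_def N_def by (rule refl)
  have Kyx: "K = real n2 * real n1 * (real n2 - 1) * (real n1 - 1) / (N*(N-1)*(N-2)*(N-3))"
    unfolding Kxy by (simp only: mult_ac)
  have ff0: "\<And>n. ff n 0 = 1" by (simp add: ff_def)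
  have ff2: "\<And>n. ff n 2 = real n * (real n - 1)" unfolding ff_def by (rule ff_vals)
  have ff3: "\<And>n. ff n 3 = real n * (real n - 1) * (real n - 2)" unfolding ff_def by (rule ff_vals)
  have ff4: "\<And>n. ff n 4 = real n * (real n - 1) * (real n - 2) * (real n - 3)" unfolding ff_def by (rule ff_vals)
  have Eedge: "\<And>e. e \<in> E \<Longrightarrow> e \<subseteq> ?U \<and> finite e \<and> card e = 2"
    using assms(3) unfolding simple_graph_on_def by fastforce
  have finE: "finite E"
  proof -
    have "E \<subseteq> Pow ?U" using Eedge by auto
    then show ?thesis by (rule finite_subset) simp
  qed
  have finL: "finite L" by (simp add: L_def finite_label_vectors)
  have cardL: "card L > 0" using assms(1,2) by (simp add: L_def card_label_vectors)
  then have neL: "L \<noteq> {}" by auto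
  have c0: "c > 0" using cardL by (simp add: c_def)
  have expf: "\<And>f. measure_pmf.expectation p f = (\<Sum>g\<in>L. f g) / c"
    unfolding p_def label_pmf_def L_def[symmetric] c_def by (rule integral_pmf_of_set[OF neL finL])
  have R1i: "R1 = (\<lambda>g. \<Sum>e\<in>E. w e * ind 0 e g)" by (rule ext) (simp add: R1_def Rw_def ind_def)
  have R2i: "R2 = (\<lambda>g. \<Sum>e\<in>E. w e * ind 1 e g)" by (rule ext) (simp add: R2_def Rw_def ind_def)
  have probAB: "(\<Sum>g\<in>L. if (\<forall>i\<in>A. g i = 0) \<and> (\<forall>i\<in>B. g i = 1) then 1 else 0) / c
      = ff n1 (card A) * ff n2 (card B) / ff (n1+n2) (card A + card B)"
    if "A \<subseteq> ?U" "B \<subseteq> ?U" "A \<inter> B = {}" for A B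
    unfolding sum_ind_card[OF finL] unfolding c_def L_def ff_def by (rule prob_AB[OF that])
  have P00: "(\<Sum>g\<in>L. ind 0 e g * ind 0 f g) / c = ff n1 (card (e \<union> f)) / ff (n1+n2) (card (e \<union> f))"
    if e: "e \<in> E" and f: "f \<in> E" for e f
  proof -
    have "(\<Sum>g\<in>L. ind 0 e g * ind 0 f g) = (\<Sum>g\<in>L. if (\<forall>i\<in>e \<union> f. g i = 0) \<and> (\<forall>i\<in>{}. g i = 1) then 1 else 0)"
      by (rule sum.cong) (auto simp: ind_def)
    also have "\<dots> / c = ff n1 (card (e \<union> f)) * ff n2 (card ({}::nat set)) / ff (n1+n2) (card (e \<union> f) + card ({}::nat set))"
      by (rule probAB) (use Eedge[OF e] Eedge[OF f] in auto)
    finally show ?thesis by (simp add: ff0)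
  qed
  have P11: "(\<Sum>g\<in>L. ind 1 e g * ind 1 f g) / c = ff n2 (card (e \<union> f)) / ff (n1+n2) (card (e \<union> f))"
    if e: "e \<in> E" and f: "f \<in> E" for e f
  proof -
    have "(\<Sum>g\<in>L. ind 1 e g * ind 1 f g) = (\<Sum>g\<in>L. if (\<forall>i\<in>{}. g i = 0) \<and> (\<forall>i\<in>e \<union> f. g i = 1) then 1 else 0)"
      by (rule sum.cong) (auto simp: ind_def)
    also have "\<dots> / c = ff n1 (card ({}::nat set)) * ff n2 (card (e \<union> f)) / ff (n1+n2) (card ({}::nat set) + card (e \<union> f))"
      by (rule probAB) (use Eedge[OF e] Eedge[OF f] in auto)
    finally show ?thesis by (simp add: ff0)
  qed
  have P01: "(\<Sum>g\<in>L. ind 0 e g * ind 1 f g) / c = (if e \<inter> f = {} then ff n1 2 * ff n2 2 / ff (n1+n2) 4 else 0)"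
    if e: "e \<in> E" and f: "f \<in> E" for e f
  proof (cases "e \<inter> f = {}")
    case True
    have "(\<Sum>g\<in>L. ind 0 e g * ind 1 f g) = (\<Sum>g\<in>L. if (\<forall>i\<in>e. g i = 0) \<and> (\<forall>i\<in>f. g i = 1) then 1 else 0)"
      by (rule sum.cong) (auto simp: ind_def)
    also have "\<dots> / c = ff n1 (card e) * ff n2 (card f) / ff (n1+n2) (card e + card f)"
      by (rule probAB) (use Eedge[OF e] Eedge[OF f] True in auto)
    finally show ?thesis using True Eedge[OF e] Eedge[OF f] by simp
  next
    case False
    then obtain i where i: "i \<in> e" "i \<in> f" by blast
    have z: "ind 0 e g * ind 1 f g = 0" for g
    proof (cases "g i = 0")
      case True
      have "\<not> (\<forall>j\<in>f. g j = 1)"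
      proof
        assume "\<forall>j\<in>f. g j = 1"
        then have "g i = 1" using i by blast
        then show False using True by simp
      qed
      then show ?thesis by (simp add: ind_def)
    next
      case False
      have "\<not> (\<forall>j\<in>e. g j = 0)"
      proof
        assume "\<forall>j\<in>e. g j = 0"
        then have "g i = 0" using i by blast
        then show False using False by simp
      qed
      then have "ind 0 e g = 0" unfolding ind_def by (simp only: if_False)
      then show ?thesis by simp
    qed
    have "(\<Sum>g\<in>L. ind 0 e g * ind 1 f g) = (\<Sum>g\<in>L. 0)"
      by (rule sum.cong[OF refl], rule z)
    then show ?thesis using False by simp
  qed
  have M0: "(\<Sum>g\<in>L. ind 0 e g) / c = ff n1 2 / ff (n1+n2) 2" if e: "e \<in> E" for e
  proof -
    have "(\<Sum>g\<in>L. ind 0 e g) = (\<Sum>g\<in>L. if (\<forall>i\<in>e. g i = 0) \<and> (\<forall>i\<in>{}. g i = 1) then 1 else 0)"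
      by (rule sum.cong) (auto simp: ind_def)
    also have "\<dots> / c = ff n1 (card e) * ff n2 (card ({}::nat set)) / ff (n1+n2) (card e + card ({}::nat set))"
      by (rule probAB) (use Eedge[OF e] in auto)
    finally show ?thesis using Eedge[OF e] by (simp add: ff0)
  qed
  have M1: "(\<Sum>g\<in>L. ind 1 e g) / c = ff n2 2 / ff (n1+n2) 2" if e: "e \<in> E" for e
  proof -
    have "(\<Sum>g\<in>L. ind 1 e g) = (\<Sum>g\<in>L. if (\<forall>i\<in>{}. g i = 0) \<and> (\<forall>i\<in>e. g i = 1) then 1 else 0)"
      by (rule sum.cong) (auto simp: ind_def)
    also have "\<dots> / c = ff n1 (card ({}::nat set)) * ff n2 (card e) / ff (n1+n2) (card ({}::nat set) + card e)"
      by (rule probAB) (use Eedge[OF e] in auto)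
    finally have "(\<Sum>g\<in>L. ind 1 e g) / c = ff n1 (card ({}::nat set)) * ff n2 (card e) / ff (n1+n2) (card ({}::nat set) + card e)" .
    moreover have "card ({}::nat set) = 0" "card e = 2" using Eedge[OF e] by simp_all
    ultimately show ?thesis by (simp only: ff0 mult_1_left add_0_left)
  qed
  have Qid: "(\<Sum>e\<in>E. \<Sum>f\<in>E. w e * w f * real (card (e \<inter> f))) = QQ"
    unfolding QQ_def by (rule Q_ident) (use finE Eedge in auto)
  define h0 where "h0 = (\<lambda>j. ff n1 j / ff (n1+n2) j)"
  define h1 where "h1 = (\<lambda>j. ff n2 j / ff (n1+n2) j)"
  have h02: "h0 2 = real n1 * (real n1 - 1) / (N * (N - 1))" unfolding h0_def ff2 N_def by (rule refl)
  have h03: "h0 3 = real n1 * (real n1 - 1) * (real n1 - 2) / (N * (N - 1) * (N - 2))" unfolding h0_def ff3 N_def by (rule refl)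
  have h04: "h0 4 = real n1 * (real n1 - 1) * (real n1 - 2) * (real n1 - 3) / (N * (N - 1) * (N - 2) * (N - 3))" unfolding h0_def ff4 N_def by (rule refl)
  have h12: "h1 2 = real n2 * (real n2 - 1) / (N * (N - 1))" unfolding h1_def ff2 N_def by (rule refl)
  have h13: "h1 3 = real n2 * (real n2 - 1) * (real n2 - 2) / (N * (N - 1) * (N - 2))" unfolding h1_def ff3 N_def by (rule refl)
  have h14: "h1 4 = real n2 * (real n2 - 1) * (real n2 - 2) * (real n2 - 3) / (N * (N - 1) * (N - 2) * (N - 3))" unfolding h1_def ff4 N_def by (rule refl)
  have qv: "ff n1 2 * ff n2 2 / ff (n1+n2) 4 = real n1 * (real n1 - 1) * (real n2 * (real n2 - 1)) / (N * (N - 1) * (N - 2) * (N - 3))"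
    unfolding ff2 ff4 N_def by (rule refl)
  have sum1: "(\<Sum>g\<in>L. R1 g) / c = W * h0 2"
    unfolding R1i single_sum_c W_def sum_distrib_right
    by (rule sum.cong[OF refl]) (simp only: M0 h0_def)
  have sum2: "(\<Sum>g\<in>L. R2 g) / c = W * h1 2"
    unfolding R2i single_sum_c W_def sum_distrib_right
    by (rule sum.cong[OF refl]) (simp only: M1 h1_def)
  have E1: "measure_pmf.expectation p R1 = (\<Sum>e\<in>E. w e * (real n1 * (real n1 - 1) / (N * (N - 1))))"
    unfolding expf sum1 W_def h02 sum_distrib_right ..
  have E2: "measure_pmf.expectation p R2 = (\<Sum>e\<in>E. w e * (real n2 * (real n2 - 1) / (N * (N - 1))))"
    unfolding expf sum2 W_def h12 sum_distrib_right ..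
  have sq1: "(\<Sum>g\<in>L. R1 g * R1 g) / c = h0 4 * W\<^sup>2 + (h0 3 - h0 4) * QQ + (h0 2 - 2 * h0 3 + h0 4) * S1"
  proof -
    have "(\<Sum>g\<in>L. R1 g * R1 g) / c = (\<Sum>e\<in>E. \<Sum>f\<in>E. w e * w f * h0 (card (e \<union> f)))"
      unfolding R1i double_sum_c
      by (intro sum.cong refl) (simp only: P00 h0_def)
    also have "\<dots> = (\<Sum>e\<in>E. \<Sum>f\<in>E. w e * w f * (h0 4 + (h0 3 - h0 4) * real (card (e \<inter> f)) + (h0 2 - 2 * h0 3 + h0 4) * (if e = f then 1 else 0)))"
      by (intro sum.cong refl, subst pair_decomp(1)) (use Eedge in auto)
    also have "\<dots> = h0 4 * W\<^sup>2 + (h0 3 - h0 4) * QQ + (h0 2 - 2 * h0 3 + h0 4) * S1"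
      unfolding split3[OF finE] Qid W_def S1_def ..
    finally show ?thesis .
  qed
  have sq2: "(\<Sum>g\<in>L. R2 g * R2 g) / c = h1 4 * W\<^sup>2 + (h1 3 - h1 4) * QQ + (h1 2 - 2 * h1 3 + h1 4) * S1"
  proof -
    have "(\<Sum>g\<in>L. R2 g * R2 g) / c = (\<Sum>e\<in>E. \<Sum>f\<in>E. w e * w f * h1 (card (e \<union> f)))"
      unfolding R2i double_sum_c
      by (intro sum.cong refl) (simp only: P11 h1_def)
    also have "\<dots> = (\<Sum>e\<in>E. \<Sum>f\<in>E. w e * w f * (h1 4 + (h1 3 - h1 4) * real (card (e \<inter> f)) + (h1 2 - 2 * h1 3 + h1 4) * (if e = f then 1 else 0)))"
      by (intro sum.cong refl, subst pair_decomp(1)) (use Eedge in auto)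
    also have "\<dots> = h1 4 * W\<^sup>2 + (h1 3 - h1 4) * QQ + (h1 2 - 2 * h1 3 + h1 4) * S1"
      unfolding split3[OF finE] Qid W_def S1_def ..
    finally show ?thesis .
  qed
  define q where "q = ff n1 2 * ff n2 2 / ff (n1+n2) 4"
  have sq12: "(\<Sum>g\<in>L. R1 g * R2 g) / c = q * W\<^sup>2 + (- q) * QQ + q * S1"
  proof -
    have "(\<Sum>g\<in>L. R1 g * R2 g) / c = (\<Sum>e\<in>E. \<Sum>f\<in>E. w e * w f * (if e \<inter> f = {} then q else 0))"
      unfolding R1i R2i double_sum_c
      by (intro sum.cong refl) (simp only: P01 q_def)
    also have "\<dots> = (\<Sum>e\<in>E. \<Sum>f\<in>E. w e * w f * (q + (- q) * real (card (e \<inter> f)) + q * (if e = f then 1 else 0)))"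
    proof (intro sum.cong refl)
      fix e f assume e: "e \<in> E" and f: "f \<in> E"
      have "(if e \<inter> f = {} then q else 0) = q * (if e \<inter> f = {} then 1 else 0)" by simp
      also have "\<dots> = q * (1 - real (card (e \<inter> f)) + (if e = f then 1 else 0))"
        by (subst pair_decomp(2)) (use Eedge[OF e] Eedge[OF f] in auto)
      also have "\<dots> = q + (- q) * real (card (e \<inter> f)) + q * (if e = f then 1 else 0)"
        by (simp add: algebra_simps)
      finally show "w e * w f * (if e \<inter> f = {} then q else 0) = w e * w f * (q + (- q) * real (card (e \<inter> f)) + q * (if e = f then 1 else 0))"
        by simp
    qed
    also have "\<dots> = q * W\<^sup>2 + (- q) * QQ + q * S1"
      unfolding split3[OF finE] Qid W_def S1_def ..
    finally show ?thesis .
  qed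
  have V1: "measure_pmf.variance p R1 = (\<Sum>g\<in>L. R1 g * R1 g) / c - ((\<Sum>g\<in>L. R1 g) / c) * ((\<Sum>g\<in>L. R1 g) / c)"
    unfolding expf power2_eq_square c_def by (rule mean_cov[OF finL neL])
  have V2: "measure_pmf.variance p R2 = (\<Sum>g\<in>L. R2 g * R2 g) / c - ((\<Sum>g\<in>L. R2 g) / c) * ((\<Sum>g\<in>L. R2 g) / c)"
    unfolding expf power2_eq_square c_def by (rule mean_cov[OF finL neL])
  have C12: "covariance p R1 R2 = (\<Sum>g\<in>L. R1 g * R2 g) / c - ((\<Sum>g\<in>L. R1 g) / c) * ((\<Sum>g\<in>L. R2 g) / c)"
    unfolding covariance_def expf c_def by (rule mean_cov[OF finL neL])
  have Var1: "measure_pmf.variance p R1 =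
           K * (- S2 + 2 * (2 * N - 3) / (N * (N - 1)) * S3
                + (N - 3) / (real n2 - 1) * (S1 + S2) - 4 * (N - 3) / (N * (real n2 - 1)) * S3)"
    unfolding V1 sq1 sum1 S2QQ S3W h02 h03 h04
    by (rule lin_var[OF c3[OF x2 y2 Nxy Kxy] cQ[OF x2 y2 Nxy Kxy] c1[OF x2 y2 Nxy Kxy]])
  have Var2: "measure_pmf.variance p R2 =
           K * (- S2 + 2 * (2 * N - 3) / (N * (N - 1)) * S3
                + (N - 3) / (real n1 - 1) * (S1 + S2) - 4 * (N - 3) / (N * (real n1 - 1)) * S3)"
    unfolding V2 sq2 sum2 S2QQ S3W h12 h13 h14
    by (rule lin_var[OF c3[OF y2 x2 Nyx Kyx] cQ[OF y2 x2 Nyx Kyx] c1[OF y2 x2 Nyx Kyx]])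
  have Cov: "covariance p R1 R2 = K * (- S2 + 2 * (2 * N - 3) / (N * (N - 1)) * S3)"
    unfolding C12 sq12 sum1 sum2 S2QQ S3W h02 h12 q_def qv
    by (rule lin_cov[OF ccov[OF x2 y2 Nxy Kxy]])
  show ?thesis using E1 E2 Var1 Var2 Cov by blast
qed

end
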